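(* Let ${\bf D}$ be an $L\times N$ complex matrix with $L=Rd$, $N=Md$, whose columns have unit Euclidean norm, partitioned into consecutive column-blocks ${\bf D}[1],\dots,{\bf D}[M]$ of size $L\times d$, and assume ${\bf D}{\bf g}\neq{\bf 0}$ for every nonzero block $2k$-sparse ${\bf g}\in\mathbb{C}^N$. Let ${\bf x}_0\in\mathbb{C}^N$ be block $k$-sparse and ${\bf y}={\bf D}{\bf x}_0$. Let ${\bf D}_0$ be the $L\times (kd)$ matrix formed by the blocks ${\bf D}[\ell]$ corresponding to the nonzero blocks of ${\bf x}_0$ (so that the support has $k$ blocks), and $\overline{{\bf D}}_0$ the $L\times(N-kd)$ matrix formed by the remaining blocks of ${\bf D}$. If $$\rho_c({\bf D}_0^\dagger\overline{{\bf D}}_0)<1,$$ then both the BOMP algorithm and L-OPT recover ${\bf x}_0$ from ${\bf y}$. Moreover, in this case BOMP picks a correct new block (a block ${\bf D}[\ell]$ belonging to ${\bf D}_0$, not previously selected) in each step, and consequently converges (recovers ${\bf x}_0$) in at most $k$ steps.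
   Context: Vectors ${\bf x}\in\mathbb{C}^N$, $N=Md$, are viewed as concatenations of consecutive length-$d$ blocks ${\bf x}[1],\dots,{\bf x}[M]$; ${\bf x}$ is block $k$-sparse if $\|{\bf x}[\ell]\|_2>0$ for at most $k$ indices $\ell$. $\rho(\cdot)$ is the spectral norm and ${\bf A}^\dagger$ the Moore–Penrose pseudo-inverse. For a matrix ${\bf A}$ whose row and column numbers are multiples of $d$, with $(\ell,r)$th $d\times d$ block ${\bf A}[\ell,r]$, $\rho_c({\bf A})=\max_r\sum_\ell\rho({\bf A}[\ell,r])$. L-OPT: solve $\min_{\bf x}\sum_{\ell=1}^M\|{\bf x}[\ell]\|_2$ subject to ${\bf y}={\bf D}{\bf x}$; recovery means ${\bf x}_0$ is the unique minimizer. BOMP: initialize ${\bf r}_0={\bf y}$ and the selected index set $\mathcal I=\emptyset$. At stage $\ell\ge1$ choose $i_\ell=\arg\max_i\|{\bf D}^H[i]{\bf r}_{\ell-1}\|_2$, add $i_\ell$ to $\mathcal I$, compute coefficients ${\bf x}_\ell[i]$, $i\in\mathcal I$, minimizing $\|{\bf y}-\sum_{i\in\mathcal I}{\bf D}[i]{\bf x}_\ell[i]\|_2$, and set ${\bf r}_\ell={\bf y}-\sum_{i\in\mathcal I}{\bf D}[i]{\bf x}_\ell[i]$. Recovery means the resulting coefficient vector (zero on unselected blocks) equals ${\bf x}_0$. *)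

theory Defs
  imports "Jordan_Normal_Form.Matrix" "HOL-Library.Multiset"
begin

text \<open>Conventions: blocks are indexed from 0 (block l of a vector occupies
entries l*d ,..., l*d+d-1). Complex matrices/vectors are Jordan_Normal_Form
matrices/vectors with explicit dimensions.\<close>

definition ctrans :: "complex mat \<Rightarrow> complex mat" where
  "ctrans A = mat (dim_col A) (dim_row A) (\<lambda>(i,j). cnj (A $$ (j,i)))"

definition vnorm :: "complex vec \<Rightarrow> real" where
  "vnorm v = sqrt (\<Sum>i<dim_vec v. (cmod (v $ i))\<^sup>2)"

definition spec_norm :: "complex mat \<Rightarrow> real" where
  "spec_norm A = Sup {vnorm (A *\<^sub>v v) | v. dim_vec v = dim_col A \<and> vnorm v \<le> 1}"

definition pinv :: "complex mat \<Rightarrow> complex mat" where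
  "pinv A = (THE X. X \<in> carrier_mat (dim_col A) (dim_row A) \<and>
              A * X * A = A \<and> X * A * X = X \<and>
              ctrans (A * X) = A * X \<and> ctrans (X * A) = X * A)"

definition vblock :: "nat \<Rightarrow> complex vec \<Rightarrow> nat \<Rightarrow> complex vec" where
  "vblock d x l = vec d (\<lambda>i. x $ (l * d + i))"

definition cblock :: "nat \<Rightarrow> complex mat \<Rightarrow> nat \<Rightarrow> complex mat" where
  "cblock d A l = mat (dim_row A) d (\<lambda>(i,j). A $$ (i, l * d + j))"

definition mblock :: "nat \<Rightarrow> complex mat \<Rightarrow> nat \<Rightarrow> nat \<Rightarrow> complex mat" where
  "mblock d A l r = mat d d (\<lambda>(i,j). A $$ (l * d + i, r * d + j))"

definition block_support :: "nat \<Rightarrow> nat \<Rightarrow> complex vec \<Rightarrow> nat set" where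
  "block_support d M x = {l. l < M \<and> vnorm (vblock d x l) > 0}"

definition block_sparse :: "nat \<Rightarrow> nat \<Rightarrow> nat \<Rightarrow> complex vec \<Rightarrow> bool" where
  "block_sparse d M k x \<longleftrightarrow> card (block_support d M x) \<le> k"

definition rho_c :: "nat \<Rightarrow> complex mat \<Rightarrow> real" where
  "rho_c d A = Max (insert 0 ((\<lambda>r. \<Sum>l<dim_row A div d. spec_norm (mblock d A l r))
                            ` {..<dim_col A div d}))"

definition blocks_mat :: "nat \<Rightarrow> complex mat \<Rightarrow> nat list \<Rightarrow> complex mat" where
  "blocks_mat d A is = mat (dim_row A) (length is * d)
      (\<lambda>(i,j). A $$ (i, (is ! (j div d)) * d + j mod d))"

text \<open>Sum of the l2 norms of the blocks (L-OPT objective).\<close>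
definition mixed_norm :: "nat \<Rightarrow> nat \<Rightarrow> complex vec \<Rightarrow> real" where
  "mixed_norm d M x = (\<Sum>l<M. vnorm (vblock d x l))"

definition ls_coeffs :: "nat \<Rightarrow> nat \<Rightarrow> complex mat \<Rightarrow> complex vec \<Rightarrow> nat set \<Rightarrow> complex vec set" where
  "ls_coeffs d M D y I = {x. dim_vec x = M * d \<and> (\<forall>l<M. l \<notin> I \<longrightarrow> vblock d x l = 0\<^sub>v d) \<and>
      (\<forall>x'. dim_vec x' = M * d \<and> (\<forall>l<M. l \<notin> I \<longrightarrow> vblock d x' l = 0\<^sub>v d) \<longrightarrow>
            vnorm (y - D *\<^sub>v x) \<le> vnorm (y - D *\<^sub>v x'))}"

text \<open>A run of n stages of BOMP (any tie-breaking in the argmax):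
is ! j is the block chosen at stage j+1, xs ! j the coefficient vector
computed at stage j+1; the residual before stage j+1 is y for j = 0 and
y - D xs!(j-1) otherwise.\<close>
definition bomp_run :: "nat \<Rightarrow> nat \<Rightarrow> complex mat \<Rightarrow> complex vec \<Rightarrow> nat list \<Rightarrow> complex vec list \<Rightarrow> bool" where
  "bomp_run d M D y is xs \<longleftrightarrow> length is = length xs \<and>
     (\<forall>j < length is.
        (let r = (if j = 0 then y else y - D *\<^sub>v (xs ! (j - 1))) in
          is ! j < M \<and>
          (\<forall>i<M. vnorm (ctrans (cblock d D i) *\<^sub>v r) \<le> vnorm (ctrans (cblock d D (is ! j)) *\<^sub>v r)) \<and>
          xs ! j \<in> ls_coeffs d M D y (set (take (Suc j) is))))"

end

theory Submission
  imports Defs "Jordan_Normal_Form.Determinant" "HOL-Analysis.L2_Norm"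
begin


definition ip :: "complex vec \<Rightarrow> complex vec \<Rightarrow> complex" where
  "ip v w = (\<Sum>i<dim_vec v. v $ i * cnj (w $ i))"

lemma vnorm_L2: "vnorm v = L2_set (\<lambda>i. cmod (v $ i)) {..<dim_vec v}"
  unfolding vnorm_def L2_set_def by simp

lemma vnorm_nonneg[simp]: "0 \<le> vnorm v"
  unfolding vnorm_def by (simp add: sum_nonneg)

lemma vnorm_sq: "(vnorm v)\<^sup>2 = (\<Sum>i<dim_vec v. (cmod (v $ i))\<^sup>2)"
  unfolding vnorm_def by (simp add: sum_nonneg)

lemma ip_self: "ip v v = complex_of_real ((vnorm v)\<^sup>2)"
  unfolding vnorm_sq ip_def of_real_sum
  by (intro sum.cong refl) (simp add: complex_norm_square[symmetric])

lemma vnorm_eq_0_iff: "vnorm v = 0 \<longleftrightarrow> v = 0\<^sub>v (dim_vec v)"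
proof -
  have "vnorm v = 0 \<longleftrightarrow> (\<forall>i\<in>{..<dim_vec v}. cmod (v $ i) = 0)"
    unfolding vnorm_L2 by (rule L2_set_eq_0_iff) simp
  also have "\<dots> \<longleftrightarrow> v = 0\<^sub>v (dim_vec v)"
    by (auto simp: vec_eq_iff)
  finally show ?thesis .
qed

lemma vnorm_pos_iff: "0 < vnorm v \<longleftrightarrow> v \<noteq> 0\<^sub>v (dim_vec v)"
  using vnorm_eq_0_iff[of v] vnorm_nonneg[of v] by linarith

lemma vnorm_zero[simp]: "vnorm (0\<^sub>v n) = 0"
  unfolding vnorm_def by simp

lemma vnorm_smult: "vnorm (c \<cdot>\<^sub>v v) = cmod c * vnorm v"
  unfolding vnorm_def by (simp add: norm_mult power_mult_distrib sum_distrib_left[symmetric] real_sqrt_mult)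

lemma vnorm_add: "dim_vec w = dim_vec v \<Longrightarrow> vnorm (v + w) \<le> vnorm v + vnorm w"
proof -
  assume d: "dim_vec w = dim_vec v"
  have "vnorm (v + w) = L2_set (\<lambda>i. cmod (v $ i + w $ i)) {..<dim_vec v}"
    unfolding vnorm_L2 using d by (intro L2_set_cong) auto
  also have "\<dots> \<le> L2_set (\<lambda>i. cmod (v $ i) + cmod (w $ i)) {..<dim_vec v}"
    by (rule L2_set_mono) (auto simp: norm_triangle_ineq)
  also have "\<dots> \<le> vnorm v + vnorm w"
    unfolding vnorm_L2 using d by (simp add: L2_set_triangle_ineq)
  finally show ?thesis .
qed

lemma vnorm_minus_le: "dim_vec w = dim_vec v \<Longrightarrow> vnorm v - vnorm w \<le> vnorm (v - w)"
proof -
  assume d: "dim_vec w = dim_vec v"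
  have "v = (v - w) + w" using d by (auto simp: vec_eq_iff)
  hence "vnorm v = vnorm ((v - w) + w)" by simp
  also have "\<dots> \<le> vnorm (v - w) + vnorm w" using d by (intro vnorm_add) simp
  finally show ?thesis by simp
qed

lemma vnorm_uminus: "vnorm (- v) = vnorm v"
  unfolding vnorm_def by simp

lemma ip_cs: "dim_vec w = dim_vec v \<Longrightarrow> cmod (ip v w) \<le> vnorm v * vnorm w"
proof -
  assume d: "dim_vec w = dim_vec v"
  have "cmod (ip v w) \<le> (\<Sum>i<dim_vec v. cmod (v $ i * cnj (w $ i)))"
    unfolding ip_def by (rule norm_sum)
  also have "\<dots> = (\<Sum>i<dim_vec v. \<bar>cmod (v $ i)\<bar> * \<bar>cmod (w $ i)\<bar>)"
    by (simp add: norm_mult)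
  also have "\<dots> \<le> vnorm v * vnorm w"
    unfolding vnorm_L2 d by (rule L2_set_mult_ineq)
  finally show ?thesis .
qed

lemma ip_cnj: "dim_vec w = dim_vec v \<Longrightarrow> ip w v = cnj (ip v w)"
  unfolding ip_def by (simp add: mult.commute)

subsection \<open>Conjugate transpose\<close>

lemma ctrans_dims[simp]: "dim_row (ctrans A) = dim_col A" "dim_col (ctrans A) = dim_row A"
  unfolding ctrans_def by auto

lemma ctrans_carrier[simp]: "A \<in> carrier_mat n m \<Longrightarrow> ctrans A \<in> carrier_mat m n"
  unfolding ctrans_def by auto

lemma index_ctrans[simp]: "i < dim_col A \<Longrightarrow> j < dim_row A \<Longrightarrow> ctrans A $$ (i,j) = cnj (A $$ (j,i))"
  unfolding ctrans_def by auto

lemma ctrans_ctrans[simp]: "ctrans (ctrans A) = A"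
  by (rule eq_matI) auto

lemma ctrans_mult: "dim_col A = dim_row B \<Longrightarrow> ctrans (A * B) = ctrans B * ctrans A"
  by (rule eq_matI) (auto simp: scalar_prod_def mult.commute intro: sum.cong)

lemma ctrans_one[simp]: "ctrans (1\<^sub>m n) = 1\<^sub>m n"
  by (rule eq_matI) auto

lemma ip_adjoint:
  assumes "dim_vec z = dim_col A" "dim_vec w = dim_row A"
  shows "ip (A *\<^sub>v z) w = ip z (ctrans A *\<^sub>v w)"
proof -
  have "ip (A *\<^sub>v z) w = (\<Sum>i<dim_row A. \<Sum>j<dim_col A. A $$ (i,j) * z $ j * cnj (w $ i))"
    unfolding ip_def using assms
    by (auto simp: scalar_prod_def sum_distrib_right atLeast0LessThan intro!: sum.cong)
  also have "\<dots> = (\<Sum>j<dim_col A. \<Sum>i<dim_row A. A $$ (i,j) * z $ j * cnj (w $ i))"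
    by (rule sum.swap)
  also have "\<dots> = ip z (ctrans A *\<^sub>v w)"
    unfolding ip_def using assms
    by (auto simp: scalar_prod_def sum_distrib_left atLeast0LessThan intro!: sum.cong)
  finally show ?thesis .
qed

subsection \<open>Spectral norm\<close>

lemma mat_vec_bound:
  assumes "dim_vec v = dim_col A"
  shows "vnorm (A *\<^sub>v v) \<le> (\<Sum>i<dim_row A. \<Sum>j<dim_col A. cmod (A $$ (i,j))) * vnorm v"
proof -
  have comp: "cmod (v $ j) \<le> vnorm v" if "j < dim_vec v" for j
    unfolding vnorm_L2 by (rule member_le_L2_set) (use that in auto)
  have "vnorm (A *\<^sub>v v) \<le> (\<Sum>i<dim_row A. cmod ((A *\<^sub>v v) $ i))"
    unfolding vnorm_L2 dim_mult_mat_vec by (rule L2_set_le_sum) auto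
  also have "\<dots> \<le> (\<Sum>i<dim_row A. (\<Sum>j<dim_col A. cmod (A $$ (i,j))) * vnorm v)"
  proof (rule sum_mono)
    fix i assume i: "i \<in> {..<dim_row A}"
    have "cmod ((A *\<^sub>v v) $ i) = cmod (\<Sum>j<dim_col A. A $$ (i,j) * v $ j)"
      using i assms by (auto simp: scalar_prod_def atLeast0LessThan)
    also have "\<dots> \<le> (\<Sum>j<dim_col A. cmod (A $$ (i,j) * v $ j))" by (rule norm_sum)
    also have "\<dots> \<le> (\<Sum>j<dim_col A. cmod (A $$ (i,j)) * vnorm v)"
      by (rule sum_mono) (use comp assms in \<open>auto simp: norm_mult intro: mult_left_mono\<close>)
    finally show "cmod ((A *\<^sub>v v) $ i) \<le> (\<Sum>j<dim_col A. cmod (A $$ (i,j))) * vnorm v"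
      by (simp add: sum_distrib_right)
  qed
  finally show ?thesis by (simp add: sum_distrib_right)
qed

lemma spec_bdd: "bdd_above {vnorm (A *\<^sub>v v) | v. dim_vec v = dim_col A \<and> vnorm v \<le> 1}"
proof -
  let ?C = "(\<Sum>i<dim_row A. \<Sum>j<dim_col A. cmod (A $$ (i,j)))"
  have C: "0 \<le> ?C" by (intro sum_nonneg) auto
  show ?thesis
  proof (rule bdd_aboveI[of _ ?C], clarify)
    fix v assume v: "dim_vec v = dim_col A" "vnorm v \<le> 1"
    have "vnorm (A *\<^sub>v v) \<le> ?C * vnorm v" by (rule mat_vec_bound[OF v(1)])
    also have "\<dots> \<le> ?C * 1" by (rule mult_left_mono[OF v(2) C])
    finally show "vnorm (A *\<^sub>v v) \<le> ?C" by simp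
  qed
qed

lemma spec_norm_nonneg: "0 \<le> spec_norm A"
proof -
  have "vnorm (A *\<^sub>v 0\<^sub>v (dim_col A)) \<in> {vnorm (A *\<^sub>v v) | v. dim_vec v = dim_col A \<and> vnorm v \<le> 1}"
    by auto
  hence "vnorm (A *\<^sub>v 0\<^sub>v (dim_col A)) \<le> spec_norm A"
    unfolding spec_norm_def by (rule cSup_upper[OF _ spec_bdd])
  thus ?thesis using vnorm_nonneg order_trans by blast
qed

lemma spec_norm_bound:
  assumes v: "dim_vec v = dim_col A"
  shows "vnorm (A *\<^sub>v v) \<le> spec_norm A * vnorm v"
proof (cases "v = 0\<^sub>v (dim_vec v)")
  case True
  have "A *\<^sub>v v = 0\<^sub>v (dim_row A)" using True v by (auto simp: vec_eq_iff scalar_prod_def)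
  thus ?thesis using spec_norm_nonneg[of A] by simp
next
  case False
  hence pos: "0 < vnorm v" using vnorm_pos_iff by blast
  define c where "c = complex_of_real (1 / vnorm v)"
  have cm: "cmod c = 1 / vnorm v" unfolding c_def using pos by (simp only: norm_of_real) simp
  have "vnorm (c \<cdot>\<^sub>v v) = 1" using pos by (simp add: vnorm_smult cm)
  hence "vnorm (A *\<^sub>v (c \<cdot>\<^sub>v v)) \<in> {vnorm (A *\<^sub>v v) | v. dim_vec v = dim_col A \<and> vnorm v \<le> 1}"
    using v by auto
  hence "vnorm (A *\<^sub>v (c \<cdot>\<^sub>v v)) \<le> spec_norm A"
    unfolding spec_norm_def by (rule cSup_upper[OF _ spec_bdd])
  moreover have "A *\<^sub>v (c \<cdot>\<^sub>v v) = c \<cdot>\<^sub>v (A *\<^sub>v v)"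
    by (rule mult_mat_vec[of A "dim_row A" "dim_col A"]) (auto intro!: carrier_vecI v)
  ultimately have "vnorm (A *\<^sub>v v) / vnorm v \<le> spec_norm A"
    by (simp add: vnorm_smult cm)
  thus ?thesis using pos by (simp add: divide_le_eq mult.commute)
qed

lemma spec_norm_adj_bound:
  assumes w: "dim_vec w = dim_row A"
  shows "vnorm (ctrans A *\<^sub>v w) \<le> spec_norm A * vnorm w"
proof -
  define z where "z = ctrans A *\<^sub>v w"
  have dz: "dim_vec z = dim_col A" unfolding z_def by simp
  have "(vnorm z)\<^sup>2 = cmod (ip z z)" by (simp only: ip_self norm_of_real) simp
  also have "ip z z = cnj (ip (A *\<^sub>v z) w)"
    using ip_adjoint[OF dz w] ip_cnj[of z "ctrans A *\<^sub>v w"] unfolding z_def by (simp add: z_def)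
  also have "cmod (cnj (ip (A *\<^sub>v z) w)) = cmod (ip (A *\<^sub>v z) w)" by simp
  also have "\<dots> \<le> vnorm (A *\<^sub>v z) * vnorm w" by (rule ip_cs) (simp add: w)
  also have "\<dots> \<le> (spec_norm A * vnorm z) * vnorm w"
    by (rule mult_right_mono[OF spec_norm_bound[OF dz]]) simp
  finally have *: "(vnorm z)\<^sup>2 \<le> spec_norm A * vnorm w * vnorm z" by (simp add: ac_simps)
  show ?thesis
  proof (cases "vnorm z = 0")
    case True thus ?thesis unfolding z_def[symmetric]
      using spec_norm_nonneg vnorm_nonneg by (simp add: zero_le_mult_iff)
  next
    case False
    hence "0 < vnorm z" using vnorm_nonneg[of z] by linarith
    with * show ?thesis unfolding z_def[symmetric] by (simp add: power2_eq_square)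
  qed
qed

subsection \<open>Pseudo-inverse of an injective matrix\<close>

lemma pinv_props:
  assumes B: "B \<in> carrier_mat n m"
    and inj: "\<And>v. v \<in> carrier_vec m \<Longrightarrow> B *\<^sub>v v = 0\<^sub>v n \<Longrightarrow> v = 0\<^sub>v m"
  shows "pinv B \<in> carrier_mat m n" "B * pinv B * B = B" "ctrans (B * pinv B) = B * pinv B"
    "pinv B * B = 1\<^sub>m m"
proof -
  define G where "G = ctrans B * B"
  have G: "G \<in> carrier_mat m m" unfolding G_def using B by auto
  have BH: "ctrans B \<in> carrier_mat m n" using B by auto
  have "det G \<noteq> 0"
  proof
    assume "det G = 0"
    then obtain v where v: "v \<in> carrier_vec m" "v \<noteq> 0\<^sub>v m" "G *\<^sub>v v = 0\<^sub>v m"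
      using det_0_iff_vec_prod_zero[OF G] by blast
    have "ip (B *\<^sub>v v) (B *\<^sub>v v) = ip v (ctrans B *\<^sub>v (B *\<^sub>v v))"
      by (rule ip_adjoint) (use v B in auto)
    also have "ctrans B *\<^sub>v (B *\<^sub>v v) = G *\<^sub>v v" unfolding G_def
      using B v by (subst assoc_mult_mat_vec[OF BH B v(1)]) simp
    also have "ip v (G *\<^sub>v v) = 0" using v by (simp add: ip_def)
    finally have "vnorm (B *\<^sub>v v) = 0" by (simp add: ip_self)
    hence "B *\<^sub>v v = 0\<^sub>v n" using vnorm_eq_0_iff B by auto
    with inj v show False by blast
  qed
  from det_non_zero_imp_unit[OF G this, of undefined]
  obtain Gi where Gi: "Gi \<in> carrier_mat m m" "G * Gi = 1\<^sub>m m" "Gi * G = 1\<^sub>m m"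
    unfolding Units_def ring_mat_def by auto
  have GH: "ctrans G = G" unfolding G_def using B by (simp add: ctrans_mult)
  have GiH: "ctrans Gi = Gi"
  proof -
    have "ctrans Gi * G = 1\<^sub>m m"
      using arg_cong[OF Gi(2), of ctrans] ctrans_mult[of G Gi] G Gi GH by auto
    hence "ctrans Gi = ctrans Gi * (G * Gi)" using Gi GH by simp
    also have "\<dots> = (ctrans Gi * G) * Gi" by (rule assoc_mult_mat[symmetric, of _ m m _ m _ m]) (use Gi G in auto)
    also have "\<dots> = Gi" using \<open>ctrans Gi * G = 1\<^sub>m m\<close> Gi by simp
    finally show ?thesis .
  qed
  define X where "X = Gi * ctrans B"
  have X: "X \<in> carrier_mat m n" unfolding X_def using Gi BH by auto
  have XB: "X * B = 1\<^sub>m m" unfolding X_def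
    using Gi BH B by (simp add: assoc_mult_mat[of _ m m _ n _ m] G_def[symmetric])
  let ?P = "\<lambda>X. X \<in> carrier_mat (dim_col B) (dim_row B) \<and>
              B * X * B = B \<and> X * B * X = X \<and>
              ctrans (B * X) = B * X \<and> ctrans (X * B) = X * B"
  have PX: "?P X"
  proof (intro conjI)
    show "X \<in> carrier_mat (dim_col B) (dim_row B)" using X B by auto
    show "B * X * B = B" using B X XB by (simp add: assoc_mult_mat[of _ n m _ n _ m])
    show "X * B * X = X" using B X XB by simp
    show "ctrans (X * B) = X * B" using XB by simp
    have "B * X = B * Gi * ctrans B" unfolding X_def using B Gi BH
      by (simp add: assoc_mult_mat[of _ n m _ m _ n])
    moreover have "ctrans (B * Gi * ctrans B) = B * Gi * ctrans B"
      using B Gi BH GiH by (simp add: ctrans_mult assoc_mult_mat[of _ n m _ m _ n])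
    ultimately show "ctrans (B * X) = B * X" by simp
  qed
  have uniq: "Y = X" if PY: "?P Y" for Y
  proof -
    have Y: "Y \<in> carrier_mat m n" using PY B by auto
    have "ctrans B = ctrans (B * Y * B)" using PY by simp
    also have "\<dots> = ctrans B * ctrans (B * Y)" using B Y
      by (simp add: ctrans_mult, intro assoc_mult_mat[of _ m n _ m _ n]) auto
    also have "\<dots> = ctrans B * (B * Y)" using PY by simp
    also have "\<dots> = G * Y" unfolding G_def using B Y BH
      by (intro assoc_mult_mat[symmetric, of _ m n _ m _ n]) auto
    finally have "Gi * ctrans B = Gi * (G * Y)" by simp
    also have "\<dots> = (Gi * G) * Y" by (rule assoc_mult_mat[symmetric, of _ m m _ m _ n]) (use Gi G Y in auto)
    also have "\<dots> = Y" using Gi Y by simp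
    finally show ?thesis unfolding X_def by simp
  qed
  have "pinv B = X" unfolding pinv_def
    by (rule the_equality) (use PX uniq in blast)+
  thus "pinv B \<in> carrier_mat m n" "B * pinv B * B = B" "ctrans (B * pinv B) = B * pinv B"
    "pinv B * B = 1\<^sub>m m" using PX XB B by auto
qed

lemma sum_split: "(\<Sum>c<q*(d::nat). f c) = (\<Sum>r<q. \<Sum>s<d. f (r*d+s))"
proof -
  have "(\<Sum>c<q*d. f c) = (\<Sum>r<q. sum f {r*d..<r*d+d})"
    by (rule sum.nat_group[symmetric])
  also have "\<dots> = (\<Sum>r<q. \<Sum>s<d. f (r*d+s))"
  proof (rule sum.cong[OF refl])
    fix r
    have "sum f {0 + r*d..<d + r*d} = (\<Sum>s\<in>{0..<d}. f (s + r*d))"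
      by (rule sum.shift_bounds_nat_ivl)
    thus "sum f {r*d..<r*d+d} = (\<Sum>s<d. f (r*d+s))"
      by (simp add: atLeast0LessThan add.commute)
  qed
  finally show ?thesis .
qed

lemma div_mod_blk[simp]: "t < (d::nat) \<Longrightarrow> (l * d + t) div d = l" "t < d \<Longrightarrow> (l * d + t) mod d = t"
  by auto

lemma blk_lt: "l < q \<Longrightarrow> t < (d::nat) \<Longrightarrow> l * d + t < q * d"
proof -
  assume "l < q" "t < d"
  hence "l * d + t < l * d + d" by simp
  also have "\<dots> = Suc l * d" by simp
  also have "\<dots> \<le> q * d" using \<open>l < q\<close> by (intro mult_right_mono) auto
  finally show ?thesis .
qed

lemma vblock_dim[simp]: "dim_vec (vblock d x l) = d" unfolding vblock_def by simp
lemma vblock_index[simp]: "t < d \<Longrightarrow> vblock d x l $ t = x $ (l * d + t)" unfolding vblock_def by simp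
lemma cblock_dims[simp]: "dim_row (cblock d A l) = dim_row A" "dim_col (cblock d A l) = d"
  unfolding cblock_def by auto
lemma cblock_index[simp]: "i < dim_row A \<Longrightarrow> t < d \<Longrightarrow> cblock d A l $$ (i,t) = A $$ (i, l*d+t)"
  unfolding cblock_def by auto
lemma mblock_dims[simp]: "dim_row (mblock d A l r) = d" "dim_col (mblock d A l r) = d"
  unfolding mblock_def by auto
lemma mblock_index[simp]: "i < d \<Longrightarrow> j < d \<Longrightarrow> mblock d A l r $$ (i,j) = A $$ (l*d+i, r*d+j)"
  unfolding mblock_def by auto
lemma blocks_mat_dims[simp]: "dim_row (blocks_mat d A ls) = dim_row A" "dim_col (blocks_mat d A ls) = length ls * d"
  unfolding blocks_mat_def by auto

lemma cblock_mult_index: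
  "i < dim_row A \<Longrightarrow> dim_vec w = d \<Longrightarrow> (cblock d A l *\<^sub>v w) $ i = (\<Sum>s<d. A $$ (i, l*d+s) * w $ s)"
  by (simp add: scalar_prod_def atLeast0LessThan)

lemma mult_by_blocks:
  assumes "dim_col A = M * d" "dim_vec x = M * d" "i < dim_row A"
  shows "(A *\<^sub>v x) $ i = (\<Sum>l<M. (cblock d A l *\<^sub>v vblock d x l) $ i)"
proof -
  have "(A *\<^sub>v x) $ i = (\<Sum>c<M*d. A $$ (i,c) * x $ c)"
    using assms by (simp add: scalar_prod_def atLeast0LessThan)
  also have "\<dots> = (\<Sum>l<M. \<Sum>s<d. A $$ (i, l*d+s) * x $ (l*d+s))" by (rule sum_split)
  also have "\<dots> = (\<Sum>l<M. (cblock d A l *\<^sub>v vblock d x l) $ i)"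
    using assms by (auto simp: scalar_prod_def atLeast0LessThan intro!: sum.cong)
  finally show ?thesis .
qed

lemma blocks_mat_mult:
  assumes "dim_vec u = length ls * d" "i < dim_row A" "\<forall>l\<in>set ls. l * d + d \<le> dim_col A"
  shows "(blocks_mat d A ls *\<^sub>v u) $ i = (\<Sum>j<length ls. (cblock d A (ls!j) *\<^sub>v vblock d u j) $ i)"
proof -
  have "(blocks_mat d A ls *\<^sub>v u) $ i = (\<Sum>c<length ls*d. blocks_mat d A ls $$ (i,c) * u $ c)"
    using assms by (simp add: scalar_prod_def atLeast0LessThan)
  also have "\<dots> = (\<Sum>j<length ls. \<Sum>s<d. blocks_mat d A ls $$ (i, j*d+s) * u $ (j*d+s))"
    by (rule sum_split)
  also have "\<dots> = (\<Sum>j<length ls. (cblock d A (ls!j) *\<^sub>v vblock d u j) $ i)"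
  proof (rule sum.cong[OF refl])
    fix j assume j: "j \<in> {..<length ls}"
    have "\<And>s. s < d \<Longrightarrow> blocks_mat d A ls $$ (i, j*d+s) = A $$ (i, ls!j*d+s)"
      using assms j blk_lt[of j "length ls"] unfolding blocks_mat_def by auto
    thus "(\<Sum>s<d. blocks_mat d A ls $$ (i, j*d+s) * u $ (j*d+s)) = (cblock d A (ls!j) *\<^sub>v vblock d u j) $ i"
      using assms by (auto simp: scalar_prod_def atLeast0LessThan intro!: sum.cong)
  qed
  finally show ?thesis .
qed

lemma ctrans_blocks_mat_vblock:
  assumes "dim_vec r = dim_row A" "j < length ls" "\<forall>l\<in>set ls. l * d + d \<le> dim_col A"
  shows "vblock d (ctrans (blocks_mat d A ls) *\<^sub>v r) j = ctrans (cblock d A (ls!j)) *\<^sub>v r"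
proof (rule eq_vecI)
  show "dim_vec (vblock d (ctrans (blocks_mat d A ls) *\<^sub>v r) j) = dim_vec (ctrans (cblock d A (ls!j)) *\<^sub>v r)"
    by simp
  fix t assume "t < dim_vec (ctrans (cblock d A (ls!j)) *\<^sub>v r)"
  hence t: "t < d" by simp
  have jt: "j * d + t < length ls * d" using blk_lt[OF assms(2) t] .
  have lj: "ls!j * d + t < dim_col A" using assms t nth_mem[OF assms(2)] by fastforce
  show "vblock d (ctrans (blocks_mat d A ls) *\<^sub>v r) j $ t = (ctrans (cblock d A (ls!j)) *\<^sub>v r) $ t"
    using t jt lj assms(1)
    by (simp add: scalar_prod_def blocks_mat_def ctrans_def)
qed

lemma L2_set_sum_le:
  assumes "finite R"
  shows "L2_set (\<lambda>t. \<Sum>r\<in>R. f r t) T \<le> (\<Sum>r\<in>R. L2_set (f r) T)"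
  using assms
proof (induction R rule: finite_induct)
  case empty thus ?case by (simp add: L2_set_def)
next
  case (insert a R)
  have "L2_set (\<lambda>t. \<Sum>r\<in>insert a R. f r t) T = L2_set (\<lambda>t. f a t + (\<Sum>r\<in>R. f r t)) T"
    using insert by simp
  also have "\<dots> \<le> L2_set (f a) T + L2_set (\<lambda>t. \<Sum>r\<in>R. f r t) T" by (rule L2_set_triangle_ineq)
  also have "\<dots> \<le> L2_set (f a) T + (\<Sum>r\<in>R. L2_set (f r) T)" using insert by simp
  finally show ?case using insert by simp
qed

lemma vnorm_sum_bound:
  assumes "dim_vec v = d" "\<And>t. t < d \<Longrightarrow> v $ t = (\<Sum>r<(q::nat). g r $ t)" "\<And>r. r < q \<Longrightarrow> dim_vec (g r) = d"
  shows "vnorm v \<le> (\<Sum>r<q. vnorm (g r))"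
proof -
  have "vnorm v = L2_set (\<lambda>t. cmod (\<Sum>r<q. g r $ t)) {..<d}"
    unfolding vnorm_L2 using assms by (intro L2_set_cong) auto
  also have "\<dots> \<le> L2_set (\<lambda>t. \<Sum>r<q. cmod (g r $ t)) {..<d}"
    by (rule L2_set_mono) (auto intro: norm_sum)
  also have "\<dots> \<le> (\<Sum>r<q. L2_set (\<lambda>t. cmod (g r $ t)) {..<d})"
    using L2_set_sum_le[of "{..<q}" "\<lambda>r t. cmod (g r $ t)" "{..<d}"] by simp
  also have "\<dots> = (\<Sum>r<q. vnorm (g r))" unfolding vnorm_L2 using assms by simp
  finally show ?thesis .
qed

subsection \<open>Block matrix bounds\<close>

lemma blk_mat_vec_bound:
  assumes A: "A \<in> carrier_mat (p*d) (q*d)" and w: "dim_vec w = q*d" and l: "l < p"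
  shows "vnorm (vblock d (A *\<^sub>v w) l) \<le> (\<Sum>r<q. spec_norm (mblock d A l r) * vnorm (vblock d w r))"
proof -
  have "vnorm (vblock d (A *\<^sub>v w) l) \<le> (\<Sum>r<q. vnorm (mblock d A l r *\<^sub>v vblock d w r))"
  proof (rule vnorm_sum_bound)
    fix t assume t: "t < d"
    have lt: "l * d + t < p * d" by (rule blk_lt[OF l t])
    have "vblock d (A *\<^sub>v w) l $ t = (\<Sum>c<q*d. A $$ (l*d+t, c) * w $ c)"
      using A w t lt by (simp add: scalar_prod_def atLeast0LessThan)
    also have "\<dots> = (\<Sum>r<q. \<Sum>s<d. A $$ (l*d+t, r*d+s) * w $ (r*d+s))" by (rule sum_split)
    also have "\<dots> = (\<Sum>r<q. (mblock d A l r *\<^sub>v vblock d w r) $ t)"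
      using t by (auto simp: scalar_prod_def atLeast0LessThan intro!: sum.cong)
    finally show "vblock d (A *\<^sub>v w) l $ t = (\<Sum>r<q. (mblock d A l r *\<^sub>v vblock d w r) $ t)" .
  qed auto
  also have "\<dots> \<le> (\<Sum>r<q. spec_norm (mblock d A l r) * vnorm (vblock d w r))"
    by (rule sum_mono, rule spec_norm_bound) simp
  finally show ?thesis .
qed

lemma blk_adj_bound:
  assumes A: "A \<in> carrier_mat (p*d) (q*d)" and w: "dim_vec w = p*d" and r: "r < q"
  shows "vnorm (vblock d (ctrans A *\<^sub>v w) r) \<le> (\<Sum>l<p. spec_norm (mblock d A l r) * vnorm (vblock d w l))"
proof -
  have "vnorm (vblock d (ctrans A *\<^sub>v w) r) \<le> (\<Sum>l<p. vnorm (ctrans (mblock d A l r) *\<^sub>v vblock d w l))"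
  proof (rule vnorm_sum_bound)
    fix t assume t: "t < d"
    have lt: "r * d + t < q * d" by (rule blk_lt[OF r t])
    have "vblock d (ctrans A *\<^sub>v w) r $ t = (\<Sum>i<p*d. cnj (A $$ (i, r*d+t)) * w $ i)"
      using A w t lt by (simp add: scalar_prod_def atLeast0LessThan)
    also have "\<dots> = (\<Sum>l<p. \<Sum>s<d. cnj (A $$ (l*d+s, r*d+t)) * w $ (l*d+s))" by (rule sum_split)
    also have "\<dots> = (\<Sum>l<p. (ctrans (mblock d A l r) *\<^sub>v vblock d w l) $ t)"
      using t by (auto simp: scalar_prod_def atLeast0LessThan intro!: sum.cong)
    finally show "vblock d (ctrans A *\<^sub>v w) r $ t = (\<Sum>l<p. (ctrans (mblock d A l r) *\<^sub>v vblock d w l) $ t)" .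
  qed auto
  also have "\<dots> \<le> (\<Sum>l<p. spec_norm (mblock d A l r) * vnorm (vblock d w l))"
    by (rule sum_mono, rule spec_norm_adj_bound) simp
  finally show ?thesis .
qed

lemma colsum_le_rho_c:
  assumes A: "A \<in> carrier_mat (p*d) (q*d)" and d: "0 < d" and r: "r < q"
  shows "(\<Sum>l<p. spec_norm (mblock d A l r)) \<le> rho_c d A"
proof -
  have pq: "dim_row A div d = p" "dim_col A div d = q" using A d by auto
  show ?thesis unfolding rho_c_def pq
    by (rule Max_ge) (use r in auto)
qed

lemma rho_c_nonneg: "0 \<le> rho_c d A"
  unfolding rho_c_def by (rule Max_ge) auto

lemma blk_mixed_bound:
  assumes A: "A \<in> carrier_mat (p*d) (q*d)" and d: "0 < d" and w: "dim_vec w = q*d"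
  shows "(\<Sum>l<p. vnorm (vblock d (A *\<^sub>v w) l)) \<le> rho_c d A * (\<Sum>r<q. vnorm (vblock d w r))"
proof -
  have "(\<Sum>l<p. vnorm (vblock d (A *\<^sub>v w) l)) \<le> (\<Sum>l<p. \<Sum>r<q. spec_norm (mblock d A l r) * vnorm (vblock d w r))"
    by (rule sum_mono, rule blk_mat_vec_bound[OF A w]) simp
  also have "\<dots> = (\<Sum>r<q. (\<Sum>l<p. spec_norm (mblock d A l r)) * vnorm (vblock d w r))"
    by (subst sum.swap) (simp add: sum_distrib_right)
  also have "\<dots> \<le> (\<Sum>r<q. rho_c d A * vnorm (vblock d w r))"
    by (rule sum_mono, rule mult_right_mono[OF colsum_le_rho_c[OF A d]]) auto
  finally show ?thesis by (simp add: sum_distrib_left)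
qed

lemma blk_adj_max_bound:
  assumes A: "A \<in> carrier_mat (p*d) (q*d)" and d: "0 < d" and w: "dim_vec w = p*d" and r: "r < q"
    and m: "0 \<le> m" "\<And>l. l < p \<Longrightarrow> vnorm (vblock d w l) \<le> m"
  shows "vnorm (vblock d (ctrans A *\<^sub>v w) r) \<le> rho_c d A * m"
proof -
  have "vnorm (vblock d (ctrans A *\<^sub>v w) r) \<le> (\<Sum>l<p. spec_norm (mblock d A l r) * vnorm (vblock d w l))"
    by (rule blk_adj_bound[OF A w r])
  also have "\<dots> \<le> (\<Sum>l<p. spec_norm (mblock d A l r) * m)"
    by (rule sum_mono, rule mult_left_mono) (auto intro: m spec_norm_nonneg)
  also have "\<dots> = (\<Sum>l<p. spec_norm (mblock d A l r)) * m" by (simp add: sum_distrib_right)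
  also have "\<dots> \<le> rho_c d A * m" by (rule mult_right_mono[OF colsum_le_rho_c[OF A d r] m(1)])
  finally show ?thesis .
qed

subsection \<open>Least squares orthogonality\<close>

lemma ip_expand:
  assumes "dim_vec b = dim_vec a"
  shows "ip (a - complex_of_real t \<cdot>\<^sub>v b) (a - complex_of_real t \<cdot>\<^sub>v b)
     = ip a a - complex_of_real t * ip b a - complex_of_real t * ip a b + complex_of_real (t^2) * ip b b"
  using assms unfolding ip_def
  by (simp add: algebra_simps sum.distrib sum_subtractf sum_distrib_left power2_eq_square)

lemma real_arith_aux:
  fixes a b :: real assumes "0 < a" "0 \<le> b"
  shows "\<not> (2 * a \<le> a * b / (b + 1))"
proof
  assume h: "2 * a \<le> a * b / (b + 1)"
  have "a * b / (b + 1) \<le> a"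
    using assms by (simp add: divide_le_eq mult_left_mono)
  with h assms show False by linarith
qed

lemma vblock_add: "dim_vec a = M * d \<Longrightarrow> dim_vec b = M * d \<Longrightarrow> l < M \<Longrightarrow>
  vblock d (a + b) l = vblock d a l + vblock d b l"
  by (rule eq_vecI) (auto simp: blk_lt)

lemma vblock_smult: "dim_vec b = M * d \<Longrightarrow> l < M \<Longrightarrow>
  vblock d (c \<cdot>\<^sub>v b) l = c \<cdot>\<^sub>v vblock d b l"
  by (rule eq_vecI) (auto simp: blk_lt)

lemma vblock_minus: "dim_vec a = M * d \<Longrightarrow> dim_vec b = M * d \<Longrightarrow> l < M \<Longrightarrow>
  vblock d (a - b) l = vblock d a l - vblock d b l"
  by (rule eq_vecI) (auto simp: blk_lt)

lemma ls_orth: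
  assumes D: "D \<in> carrier_mat n (M*d)" and y: "dim_vec y = n"
    and x: "x \<in> ls_coeffs d M D y I" and i: "i \<in> I" "i < M"
  shows "ctrans (cblock d D i) *\<^sub>v (y - D *\<^sub>v x) = 0\<^sub>v d"
proof (rule ccontr)
  define r where "r = y - D *\<^sub>v x"
  define c where "c = ctrans (cblock d D i) *\<^sub>v r"
  assume "ctrans (cblock d D i) *\<^sub>v (y - D *\<^sub>v x) \<noteq> 0\<^sub>v d"
  hence c0: "c \<noteq> 0\<^sub>v d" unfolding c_def r_def .
  have dc: "dim_vec c = d" unfolding c_def by simp
  have dx: "dim_vec x = M * d" using x unfolding ls_coeffs_def by auto
  have dr: "dim_vec r = n" unfolding r_def using D y by simp
  define e where "e = vec (M*d) (\<lambda>p. if p div d = i then c $ (p mod d) else 0)"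
  have de: "dim_vec e = M * d" unfolding e_def by simp
  have vbe: "vblock d e l = (if l = i then c else 0\<^sub>v d)" if "l < M" for l
    by (rule eq_vecI) (use that dc in \<open>auto simp: e_def blk_lt\<close>)
  define g where "g = cblock d D i *\<^sub>v c"
  have dg: "dim_vec g = n" unfolding g_def using D by simp
  have Dg: "D *\<^sub>v e = g"
  proof (rule eq_vecI)
    show "dim_vec (D *\<^sub>v e) = dim_vec g" using D dg by simp
    fix q assume "q < dim_vec g"
    hence q: "q < dim_row D" using D dg by simp
    have "(D *\<^sub>v e) $ q = (\<Sum>l<M. (cblock d D l *\<^sub>v vblock d e l) $ q)"
      by (rule mult_by_blocks) (use D de q in auto)
    also have "\<dots> = (\<Sum>l<M. if l = i then (cblock d D l *\<^sub>v c) $ q else 0)"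
      by (rule sum.cong[OF refl]) (use q in \<open>auto simp: vbe scalar_prod_def\<close>)
    also have "\<dots> = g $ q" using i unfolding g_def by simp
    finally show "(D *\<^sub>v e) $ q = g $ q" .
  qed
  have ipgr: "ip g r = complex_of_real ((vnorm c)\<^sup>2)"
  proof -
    have "ip g r = ip c (ctrans (cblock d D i) *\<^sub>v r)" unfolding g_def
      by (rule ip_adjoint) (use dc dr D in auto)
    thus ?thesis by (simp add: c_def[symmetric] ip_self)
  qed
  have iprg: "ip r g = complex_of_real ((vnorm c)\<^sup>2)"
    using ip_cnj[of r g] dr dg ipgr by simp
  define a where "a = (vnorm c)\<^sup>2"
  define b where "b = (vnorm g)\<^sup>2"
  have a: "0 < a" unfolding a_def using c0 dc vnorm_pos_iff[of c] by simp
  have b: "0 \<le> b" unfolding b_def by simp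
  define t where "t = a / (b + 1)"
  have t: "0 < t" unfolding t_def using a b by simp
  define x' where "x' = x + complex_of_real t \<cdot>\<^sub>v e"
  have "dim_vec x' = M * d \<and> (\<forall>l<M. l \<notin> I \<longrightarrow> vblock d x' l = 0\<^sub>v d)"
  proof (intro conjI allI impI)
    show "dim_vec x' = M * d" unfolding x'_def using dx de by simp
    fix l assume l: "l < M" "l \<notin> I"
    have "vblock d x l = 0\<^sub>v d" using x l unfolding ls_coeffs_def by auto
    moreover have "l \<noteq> i" using i l by auto
    moreover have "vblock d x' l = vblock d x l + complex_of_real t \<cdot>\<^sub>v vblock d e l"
      unfolding x'_def using vblock_add[of x M d "complex_of_real t \<cdot>\<^sub>v e" l] vblock_smult[of e M d l] dx de l
      by simp
    ultimately show "vblock d x' l = 0\<^sub>v d" using vbe[OF l(1)]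
      by (intro eq_vecI) auto
  qed
  hence le: "vnorm (y - D *\<^sub>v x) \<le> vnorm (y - D *\<^sub>v x')" using x unfolding ls_coeffs_def by blast
  have "D *\<^sub>v x' = D *\<^sub>v x + D *\<^sub>v (complex_of_real t \<cdot>\<^sub>v e)" unfolding x'_def
    using dx de by (intro mult_add_distrib_mat_vec[OF D] carrier_vecI) simp_all
  also have "D *\<^sub>v (complex_of_real t \<cdot>\<^sub>v e) = complex_of_real t \<cdot>\<^sub>v (D *\<^sub>v e)"
    using de by (intro mult_mat_vec[OF D] carrier_vecI) simp
  finally have Dx': "D *\<^sub>v x' = D *\<^sub>v x + complex_of_real t \<cdot>\<^sub>v g" unfolding Dg .
  have "y - D *\<^sub>v x' = r - complex_of_real t \<cdot>\<^sub>v g" unfolding r_def Dx'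
    using D y dg by (intro eq_vecI) auto
  with le have "vnorm r \<le> vnorm (r - complex_of_real t \<cdot>\<^sub>v g)" unfolding r_def by simp
  hence le2: "(vnorm r)\<^sup>2 \<le> (vnorm (r - complex_of_real t \<cdot>\<^sub>v g))\<^sup>2"
    by (rule power_mono) simp
  have "complex_of_real ((vnorm (r - complex_of_real t \<cdot>\<^sub>v g))\<^sup>2) = ip (r - complex_of_real t \<cdot>\<^sub>v g) (r - complex_of_real t \<cdot>\<^sub>v g)"
    by (simp add: ip_self)
  also have "\<dots> = ip r r - complex_of_real t * ip g r - complex_of_real t * ip r g + complex_of_real (t^2) * ip g g"
    by (rule ip_expand) (simp add: dg dr)
  also have "\<dots> = complex_of_real ((vnorm r)\<^sup>2 - 2 * t * a + t^2 * b)"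
    unfolding ipgr iprg ip_self a_def b_def by simp
  finally have "(vnorm (r - complex_of_real t \<cdot>\<^sub>v g))\<^sup>2 = (vnorm r)\<^sup>2 - 2 * t * a + t^2 * b"
    by (metis of_real_eq_iff)
  with le2 have "(vnorm r)\<^sup>2 \<le> (vnorm r)\<^sup>2 - 2 * t * a + t^2 * b" by simp
  hence "t * (2 * a) \<le> t * (t * b)" by (simp add: power2_eq_square algebra_simps)
  hence "2 * a \<le> t * b" using t by simp
  hence "2 * a \<le> a * b / (b + 1)" unfolding t_def by simp
  with real_arith_aux[OF a b] show False by simp
qed




definition ext :: "nat \<Rightarrow> nat list \<Rightarrow> complex vec \<Rightarrow> complex vec" where
  "ext d ls x = vec (length ls * d) (\<lambda>j. x $ (ls ! (j div d) * d + j mod d))"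

lemma ext_dim[simp]: "dim_vec (ext d ls x) = length ls * d" unfolding ext_def by simp

lemma vblock_ext: "j < length ls \<Longrightarrow> vblock d (ext d ls x) j = vblock d x (ls ! j)"
  by (rule eq_vecI) (auto simp: ext_def blk_lt)

definition bmix :: "nat \<Rightarrow> nat \<Rightarrow> complex vec \<Rightarrow> real" where
  "bmix d n u = (\<Sum>j<n. vnorm (vblock d u j))"

locale ercs =
  fixes D :: "complex mat" and x0 :: "complex vec" and d R M k :: nat
  assumes d: "d > 0"
    and D: "D \<in> carrier_mat (R * d) (M * d)"
    and inj2k: "\<forall>g. dim_vec g = M * d \<and> g \<noteq> 0\<^sub>v (M * d) \<and> block_sparse d M (2 * k) g
              \<longrightarrow> D *\<^sub>v g \<noteq> 0\<^sub>v (R * d)"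
    and x0: "dim_vec x0 = M * d"
    and card: "card (block_support d M x0) = k"
begin

definition "S = block_support d M x0"
definition "sl = sorted_list_of_set S"
definition "ol = sorted_list_of_set ({..<M} - S)"
definition "D0 = blocks_mat d D sl"
definition "D0b = blocks_mat d D ol"

lemma S_sub: "S \<subseteq> {..<M}" unfolding S_def block_support_def by auto
lemma S_fin: "finite S" using S_sub finite_subset by blast
lemma cardS: "card S = k" using card unfolding S_def .
lemma k_le: "k \<le> M" using card_mono[OF _ S_sub] cardS by simp

lemma sl: "set sl = S" "distinct sl" "length sl = k"
  unfolding sl_def using S_fin cardS by simp_all
lemma ol: "set ol = {..<M} - S" "distinct ol" "length ol = M - k"
proof -
  have f: "finite ({..<M} - S)" by simp
  show "set ol = {..<M} - S" "distinct ol" unfolding ol_def using f by simp_all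
  have "card ({..<M} - S) = M - k" using card_Diff_subset[OF S_fin S_sub] cardS by simp
  thus "length ol = M - k" unfolding ol_def by simp
qed

lemma sl_lt: "j < k \<Longrightarrow> sl ! j < M" using sl S_sub nth_mem by fastforce
lemma sl_in: "j < k \<Longrightarrow> sl ! j \<in> S" using sl nth_mem by fastforce
lemma tl_lt: "j < M - k \<Longrightarrow> ol ! j < M" using ol nth_mem by fastforce
lemma tl_notin: "j < M - k \<Longrightarrow> ol ! j \<notin> S" using ol nth_mem by fastforce

lemma sum_M_split:
  "(\<Sum>l<M. f l) = (\<Sum>j<k. f (sl ! j)) + (\<Sum>j<M-k. f (ol ! j))"
proof -
  have "(\<Sum>l<M. f l) = sum f ({..<M} - S) + sum f S"
    by (rule sum.subset_diff[OF S_sub]) simp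
  also have "sum f S = (\<Sum>j<k. f (sl ! j))"
    using sum.reindex_bij_betw[OF bij_betw_nth[OF sl(2) refl refl], of f] sl by simp
  also have "sum f ({..<M} - S) = (\<Sum>j<M-k. f (ol ! j))"
    using sum.reindex_bij_betw[OF bij_betw_nth[OF ol(2) refl refl], of f] ol by simp
  finally show ?thesis by (simp add: ac_simps)
qed

lemma supp_zero: "l < M \<Longrightarrow> vblock d x l = 0\<^sub>v d \<longleftrightarrow> l \<notin> block_support d M x"
  unfolding block_support_def using vnorm_pos_iff[of "vblock d x l"] by auto

lemma x0_out: "l < M \<Longrightarrow> l \<notin> S \<Longrightarrow> vblock d x0 l = 0\<^sub>v d"
  using supp_zero unfolding S_def by blast

lemma ls_ok:
  assumes "\<forall>l\<in>set ls. l < M" shows "\<forall>l\<in>set ls. l * d + d \<le> dim_col D"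
proof
  fix l assume "l \<in> set ls"
  hence "Suc l \<le> M" using assms by auto
  hence "Suc l * d \<le> M * d" by (rule mult_right_mono) simp
  thus "l * d + d \<le> dim_col D" using D by simp
qed

lemma sl_ok: "\<forall>l\<in>set sl. l * d + d \<le> dim_col D" using ls_ok sl S_sub by auto
lemma tl_ok: "\<forall>l\<in>set ol. l * d + d \<le> dim_col D" using ls_ok ol by auto

lemma D0_carrier: "D0 \<in> carrier_mat (R*d) (k*d)"
  unfolding D0_def by (rule carrier_matI) (simp_all add: sl(3) carrier_matD[OF D])
lemma D0b_carrier: "D0b \<in> carrier_mat (R*d) ((M-k)*d)"
  unfolding D0b_def by (rule carrier_matI) (simp_all add: ol(3) carrier_matD[OF D])

lemma decomp:
  assumes x: "dim_vec x = M * d"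
  shows "D *\<^sub>v x = D0 *\<^sub>v ext d sl x + D0b *\<^sub>v ext d ol x"
proof (rule eq_vecI)
  show "dim_vec (D *\<^sub>v x) = dim_vec (D0 *\<^sub>v ext d sl x + D0b *\<^sub>v ext d ol x)"
    using D0_carrier D0b_carrier D by simp
  fix i assume "i < dim_vec (D0 *\<^sub>v ext d sl x + D0b *\<^sub>v ext d ol x)"
  hence i: "i < dim_row D" using D0_carrier D0b_carrier D by simp
  have "(D *\<^sub>v x) $ i = (\<Sum>l<M. (cblock d D l *\<^sub>v vblock d x l) $ i)"
    by (rule mult_by_blocks) (use D x i in auto)
  also have "\<dots> = (\<Sum>j<k. (cblock d D (sl!j) *\<^sub>v vblock d x (sl!j)) $ i)
      + (\<Sum>j<M-k. (cblock d D (ol!j) *\<^sub>v vblock d x (ol!j)) $ i)"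
    by (rule sum_M_split)
  also have "(\<Sum>j<k. (cblock d D (sl!j) *\<^sub>v vblock d x (sl!j)) $ i) = (D0 *\<^sub>v ext d sl x) $ i"
  proof -
    have "(D0 *\<^sub>v ext d sl x) $ i = (\<Sum>j<length sl. (cblock d D (sl!j) *\<^sub>v vblock d (ext d sl x) j) $ i)"
      unfolding D0_def by (rule blocks_mat_mult[OF _ i sl_ok]) simp
    also have "\<dots> = (\<Sum>j<k. (cblock d D (sl!j) *\<^sub>v vblock d x (sl!j)) $ i)"
      unfolding sl(3) by (rule sum.cong[OF refl]) (simp add: vblock_ext sl(3))
    finally show ?thesis by simp
  qed
  also have "(\<Sum>j<M-k. (cblock d D (ol!j) *\<^sub>v vblock d x (ol!j)) $ i) = (D0b *\<^sub>v ext d ol x) $ i"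
  proof -
    have "(D0b *\<^sub>v ext d ol x) $ i = (\<Sum>j<length ol. (cblock d D (ol!j) *\<^sub>v vblock d (ext d ol x) j) $ i)"
      unfolding D0b_def by (rule blocks_mat_mult[OF _ i tl_ok]) simp
    also have "\<dots> = (\<Sum>j<M-k. (cblock d D (ol!j) *\<^sub>v vblock d x (ol!j)) $ i)"
      unfolding ol(3) by (rule sum.cong[OF refl]) (simp add: vblock_ext ol(3))
    finally show ?thesis by simp
  qed
  finally show "(D *\<^sub>v x) $ i = (D0 *\<^sub>v ext d sl x + D0b *\<^sub>v ext d ol x) $ i"
    using i D0_carrier D0b_carrier D by simp
qed

lemma decomp_supp:
  assumes x: "dim_vec x = M * d" and out: "\<And>l. l < M \<Longrightarrow> l \<notin> S \<Longrightarrow> vblock d x l = 0\<^sub>v d"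
  shows "D *\<^sub>v x = D0 *\<^sub>v ext d sl x"
proof -
  have "ext d ol x = 0\<^sub>v ((M-k)*d)"
  proof (rule eq_vecI)
    fix c assume "c < dim_vec (0\<^sub>v ((M-k)*d))"
    hence c: "c < (M-k)*d" by simp
    hence cd: "c div d < M - k" using d by (simp add: less_mult_imp_div_less)
    have "ext d ol x $ c = vblock d (ext d ol x) (c div d) $ (c mod d)"
      using d by simp
    also have "\<dots> = 0" using vblock_ext[of "c div d" ol d x] ol cd out[OF tl_lt[OF cd] tl_notin[OF cd]] d
      by simp
    finally show "ext d ol x $ c = 0\<^sub>v ((M-k)*d) $ c" using c by simp
  qed (use ol in simp)
  hence "D0b *\<^sub>v ext d ol x = 0\<^sub>v (R*d)" using D0b_carrier by (intro eq_vecI) (auto simp: scalar_prod_def)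
  hence "D *\<^sub>v x = D0 *\<^sub>v ext d sl x + 0\<^sub>v (R*d)" using decomp[OF x] by simp
  also have "\<dots> = D0 *\<^sub>v ext d sl x" by (rule right_zero_vec) (use D0_carrier in \<open>auto intro: carrier_vecI\<close>)
  finally show ?thesis .
qed

lemma supp_card:
  assumes "\<And>l. l < M \<Longrightarrow> l \<notin> S \<Longrightarrow> vblock d x l = 0\<^sub>v d"
  shows "block_sparse d M (2*k) x"
proof -
  have "block_support d M x \<subseteq> S"
  proof
    fix l assume "l \<in> block_support d M x"
    hence l: "l < M" "0 < vnorm (vblock d x l)" unfolding block_support_def by auto
    show "l \<in> S"
    proof (rule ccontr)
      assume "l \<notin> S"
      hence "vblock d x l = 0\<^sub>v d" using assms l by blast
      with l show False by simp
    qed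
  qed
  hence "card (block_support d M x) \<le> k" using card_mono[OF S_fin] cardS by metis
  thus ?thesis unfolding block_sparse_def by simp
qed

lemma inj_supp:
  assumes x: "dim_vec x = M * d" and out: "\<And>l. l < M \<Longrightarrow> l \<notin> S \<Longrightarrow> vblock d x l = 0\<^sub>v d"
    and Dx: "D *\<^sub>v x = 0\<^sub>v (R*d)"
  shows "x = 0\<^sub>v (M*d)"
proof (rule ccontr)
  assume "x \<noteq> 0\<^sub>v (M*d)"
  hence "D *\<^sub>v x \<noteq> 0\<^sub>v (R * d)" using spec[OF inj2k, of x] supp_card[OF out] x by simp
  with Dx show False by simp
qed


lemma D0_inj:
  assumes u: "u \<in> carrier_vec (k*d)" and Du: "D0 *\<^sub>v u = 0\<^sub>v (R*d)"
  shows "u = 0\<^sub>v (k*d)"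
proof -
  define emb where "emb = vec (M*d) (\<lambda>c. if c div d \<in> S then u $ (the_inv_into {..<k} ((!) sl) (c div d) * d + c mod d) else 0)"
  have de: "dim_vec emb = M*d" unfolding emb_def by simp
  have out: "vblock d emb l = 0\<^sub>v d" if "l < M" "l \<notin> S" for l
    by (rule eq_vecI) (use that in \<open>auto simp: emb_def blk_lt\<close>)
  have ext: "ext d sl emb = u"
  proof (rule eq_vecI)
    show "dim_vec (ext d sl emb) = dim_vec u" using u sl(3) by simp
    fix c assume "c < dim_vec u"
    hence c: "c < k * d" using u by simp
    hence cd: "c div d < k" using d by (simp add: less_mult_imp_div_less)
    have md: "c mod d < d" using d by simp
    have lt: "sl ! (c div d) * d + c mod d < M * d" by (rule blk_lt[OF sl_lt[OF cd] md])
    have idx: "the_inv_into {..<k} ((!) sl) (sl ! (c div d)) = c div d"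
      by (rule the_inv_into_f_f) (use bij_betw_nth[OF sl(2) refl refl] sl(3) cd in \<open>auto simp: bij_betw_def\<close>)
    have "ext d sl emb $ c = emb $ (sl ! (c div d) * d + c mod d)"
      using c sl(3) by (simp add: ext_def)
    also have "\<dots> = u $ (c div d * d + c mod d)"
      using lt md sl_in[OF cd] idx by (simp add: emb_def)
    also have "\<dots> = u $ c" by simp
    finally show "ext d sl emb $ c = u $ c" .
  qed
  have "D *\<^sub>v emb = D0 *\<^sub>v ext d sl emb" by (rule decomp_supp[OF de out])
  hence "D *\<^sub>v emb = 0\<^sub>v (R*d)" using Du ext by simp
  hence "emb = 0\<^sub>v (M*d)" using inj_supp[OF de] out by blast
  hence "ext d sl emb = 0\<^sub>v (k*d)"
  proof (intro eq_vecI)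
    fix c assume "c < dim_vec (0\<^sub>v (k*d))"
    hence c: "c < k * d" by simp
    hence cd: "c div d < k" using d by (simp add: less_mult_imp_div_less)
    have md: "c mod d < d" using d by simp
    have lt: "sl ! (c div d) * d + c mod d < M * d" by (rule blk_lt[OF sl_lt[OF cd] md])
    assume "emb = 0\<^sub>v (M*d)"
    thus "ext d sl emb $ c = 0\<^sub>v (k*d) $ c" using c lt sl(3) by (simp add: ext_def)
  qed (simp add: sl(3))
  thus ?thesis using ext by simp
qed

lemma pinvD0: "pinv D0 \<in> carrier_mat (k*d) (R*d)" "D0 * pinv D0 * D0 = D0"
  "ctrans (D0 * pinv D0) = D0 * pinv D0" "pinv D0 * D0 = 1\<^sub>m (k*d)"
  using pinv_props[OF D0_carrier D0_inj] by blast+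

definition "A = pinv D0 * D0b"

lemma A_carrier: "A \<in> carrier_mat (k*d) ((M-k)*d)"
  unfolding A_def by (rule carrier_matI) (simp_all add: carrier_matD[OF pinvD0(1)] carrier_matD[OF D0b_carrier])

lemma erc:
  assumes rho: "rho_c d A < 1" and u: "dim_vec u = k*d" and r: "r = D0 *\<^sub>v u" and r0: "r \<noteq> 0\<^sub>v (R*d)"
  shows "\<exists>l\<in>S. 0 < vnorm (ctrans (cblock d D l) *\<^sub>v r) \<and>
     (\<forall>i<M. i \<notin> S \<longrightarrow> vnorm (ctrans (cblock d D i) *\<^sub>v r) < vnorm (ctrans (cblock d D l) *\<^sub>v r))"
proof -
  have D0c: "dim_row D0 = R*d" "dim_col D0 = k*d" using carrier_matD[OF D0_carrier] by auto
  have Dc: "dim_row D = R*d" "dim_col D = M*d" using carrier_matD[OF D] by auto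
  have dr: "dim_vec r = R*d" using r D0c by simp
  define w where "w = ctrans D0 *\<^sub>v r"
  have dw: "dim_vec w = k*d" unfolding w_def using D0c by simp
  have wb: "vblock d w j = ctrans (cblock d D (sl!j)) *\<^sub>v r" if "j < k" for j
    unfolding w_def D0_def by (rule ctrans_blocks_mat_vblock) (use that dr Dc sl sl_ok in auto)
  have w0: "w \<noteq> 0\<^sub>v (k*d)"
  proof
    assume w0: "w = 0\<^sub>v (k*d)"
    have "ip r r = ip (D0 *\<^sub>v u) r" using r by simp
    also have "\<dots> = ip u w" unfolding w_def by (rule ip_adjoint) (use u D0c dr in auto)
    also have "\<dots> = 0" using w0 u by (simp add: ip_def)
    finally have "vnorm r = 0" by (simp add: ip_self)
    with r0 dr show False using vnorm_eq_0_iff by auto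
  qed
  obtain j0 where j0: "j0 < k" "vblock d w j0 \<noteq> 0\<^sub>v d"
  proof (rule ccontr)
    assume "\<not> thesis"
    hence allz: "\<And>j. j < k \<Longrightarrow> vblock d w j = 0\<^sub>v d" using that by blast
    have "w = 0\<^sub>v (k*d)"
    proof (rule eq_vecI)
      fix c assume "c < dim_vec (0\<^sub>v (k*d))"
      hence c: "c < k*d" by simp
      hence cd: "c div d < k" using d by (simp add: less_mult_imp_div_less)
      have md: "c mod d < d" using d by simp
      have "w $ c = vblock d w (c div d) $ (c mod d)" using md by simp
      also have "\<dots> = 0" using allz[OF cd] md by simp
      finally show "w $ c = 0\<^sub>v (k*d) $ c" using c by simp
    qed (use dw in simp)
    with w0 show False by simp
  qed
  define f where "f j = vnorm (vblock d w j)" for j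
  define m where "m = Max (f ` {..<k})"
  have fin: "finite (f ` {..<k})" "f ` {..<k} \<noteq> {}" using j0 by auto
  have fle: "f j \<le> m" if "j < k" for j unfolding m_def by (rule Max_ge) (use that fin in auto)
  obtain jm where jm: "jm < k" "f jm = m" using Max_in[OF fin] unfolding m_def by auto
  have mpos: "0 < m" using fle[OF j0(1)] j0(2) vnorm_pos_iff[of "vblock d w j0"] unfolding f_def by simp
  define l where "l = sl ! jm"
  have corrl: "vnorm (ctrans (cblock d D l) *\<^sub>v r) = m" using jm wb[OF jm(1)] unfolding f_def l_def by simp
  have key: "ctrans D0b *\<^sub>v r = ctrans A *\<^sub>v w"
  proof -
    define P where "P = D0 * pinv D0"
    have Pc: "P \<in> carrier_mat (R*d) (R*d)" unfolding P_def by (rule mult_carrier_mat[OF D0_carrier pinvD0(1)])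
    have pH: "ctrans (pinv D0) \<in> carrier_mat (R*d) (k*d)" by (rule ctrans_carrier[OF pinvD0(1)])
    have D0H: "ctrans D0 \<in> carrier_mat (k*d) (R*d)" by (rule ctrans_carrier[OF D0_carrier])
    have D0bH: "ctrans D0b \<in> carrier_mat ((M-k)*d) (R*d)" by (rule ctrans_carrier[OF D0b_carrier])
    have rc: "r \<in> carrier_vec (R*d)" by (rule carrier_vecI[OF dr])
    have uc: "u \<in> carrier_vec (k*d)" by (rule carrier_vecI[OF u])
    have Pr: "P *\<^sub>v r = r"
    proof -
      have "P *\<^sub>v r = (P * D0) *\<^sub>v u" unfolding r
        by (rule assoc_mult_mat_vec[symmetric, OF Pc D0_carrier uc])
      also have "(P * D0) *\<^sub>v u = D0 *\<^sub>v u" unfolding P_def pinvD0(2) ..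
      finally show ?thesis unfolding r .
    qed
    have cA: "ctrans A = ctrans D0b * ctrans (pinv D0)" unfolding A_def
      by (rule ctrans_mult) (simp add: carrier_matD[OF pinvD0(1)] carrier_matD[OF D0b_carrier])
    have cP: "ctrans (pinv D0) * ctrans D0 = P" unfolding P_def
      by (subst ctrans_mult[symmetric]) (simp_all add: carrier_matD[OF pinvD0(1)] D0c pinvD0(3))
    have "ctrans A *\<^sub>v w = (ctrans D0b * ctrans (pinv D0)) *\<^sub>v (ctrans D0 *\<^sub>v r)"
      unfolding cA w_def ..
    also have "\<dots> = ctrans D0b *\<^sub>v (ctrans (pinv D0) *\<^sub>v (ctrans D0 *\<^sub>v r))"
      by (rule assoc_mult_mat_vec[OF D0bH pH mult_mat_vec_carrier[OF D0H rc]])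
    also have "\<dots> = ctrans D0b *\<^sub>v ((ctrans (pinv D0) * ctrans D0) *\<^sub>v r)"
      by (subst assoc_mult_mat_vec[OF pH D0H rc]) (rule refl)
    also have "\<dots> = ctrans D0b *\<^sub>v r" unfolding cP Pr ..
    finally show ?thesis by (rule sym)
  qed
  show ?thesis
  proof (intro bexI conjI allI impI)
    show "l \<in> S" unfolding l_def by (rule sl_in[OF jm(1)])
    show "0 < vnorm (ctrans (cblock d D l) *\<^sub>v r)" using corrl mpos by simp
    fix i assume i: "i < M" "i \<notin> S"
    hence "i \<in> set ol" using ol by auto
    then obtain t where t: "t < M - k" "i = ol ! t" using ol(3) by (auto simp: in_set_conv_nth)
    have "ctrans (cblock d D i) *\<^sub>v r = vblock d (ctrans D0b *\<^sub>v r) t"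
      unfolding D0b_def t(2) by (rule ctrans_blocks_mat_vblock[symmetric]) (use t dr Dc ol tl_ok in auto)
    also have "\<dots> = vblock d (ctrans A *\<^sub>v w) t" using key by simp
    finally have "vnorm (ctrans (cblock d D i) *\<^sub>v r) = vnorm (vblock d (ctrans A *\<^sub>v w) t)" by simp
    also have "\<dots> \<le> rho_c d A * m"
      by (rule blk_adj_max_bound[OF A_carrier d dw t(1)]) (use mpos fle in \<open>auto simp: f_def\<close>)
    also have "\<dots> < m" using rho mpos by simp
    finally show "vnorm (ctrans (cblock d D i) *\<^sub>v r) < vnorm (ctrans (cblock d D l) *\<^sub>v r)"
      using corrl by simp
  qed
qed


lemma vnorm_vblock_neg:
  assumes "a + b = 0\<^sub>v n" "dim_vec a = n" "dim_vec b = n" "j * d + d \<le> n"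
  shows "vnorm (vblock d a j) = vnorm (vblock d b j)"
proof -
  have "\<And>t. t < d \<Longrightarrow> a $ (j*d+t) = - b $ (j*d+t)"
  proof -
    fix t assume t: "t < d"
    hence lt: "j*d+t < n" using assms(4) by simp
    have "(a + b) $ (j*d+t) = 0" using assms(1) lt by simp
    thus "a $ (j*d+t) = - b $ (j*d+t)" using lt assms(3) by (simp add: eq_neg_iff_add_eq_0)
  qed
  thus ?thesis unfolding vnorm_def by simp
qed

lemma lopt:
  assumes rho: "rho_c d A < 1" and x: "dim_vec x = M * d" and Dx: "D *\<^sub>v x = D *\<^sub>v x0" and ne: "x \<noteq> x0"
  shows "mixed_norm d M x0 < mixed_norm d M x"
proof -
  define h where "h = x - x0"
  have dh: "dim_vec h = M * d" unfolding h_def using x0 by simp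
  have xc: "x \<in> carrier_vec (M*d)" by (rule carrier_vecI[OF x])
  have x0c: "x0 \<in> carrier_vec (M*d)" by (rule carrier_vecI[OF x0])
  have Dh: "D *\<^sub>v h = 0\<^sub>v (R*d)"
  proof -
    have "D *\<^sub>v h = D *\<^sub>v x - D *\<^sub>v x0" unfolding h_def by (rule mult_minus_distrib_mat_vec[OF D xc x0c])
    also have "\<dots> = 0\<^sub>v (R*d)" unfolding Dx using D by (intro eq_vecI) auto
    finally show ?thesis .
  qed
  define h0 where "h0 = ext d sl h"
  define h1 where "h1 = ext d ol h"
  have dh0: "dim_vec h0 = k*d" unfolding h0_def using sl by simp
  have dh1: "dim_vec h1 = (M-k)*d" unfolding h1_def using ol by simp
  have dec: "D0 *\<^sub>v h0 + D0b *\<^sub>v h1 = 0\<^sub>v (R*d)" using decomp[OF dh] Dh unfolding h0_def h1_def by simp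
  have blkh: "vblock d h l = vblock d x l - vblock d x0 l" if "l < M" for l
    unfolding h_def by (rule vblock_minus[OF x x0 that])
  have h1pos: "0 < bmix d (M-k) h1"
  proof (rule ccontr)
    assume "\<not> 0 < bmix d (M-k) h1"
    hence "bmix d (M-k) h1 = 0" unfolding bmix_def using sum_nonneg[of "{..<M-k}" "\<lambda>j. vnorm (vblock d h1 j)"] by simp
    hence z: "\<forall>j\<in>{..<M-k}. vnorm (vblock d h1 j) = 0" unfolding bmix_def
      by (subst sum_nonneg_eq_0_iff[symmetric]) auto
    have out: "vblock d h l = 0\<^sub>v d" if "l < M" "l \<notin> S" for l
    proof -
      have "l \<in> set ol" using ol that by auto
      then obtain t where t: "t < M - k" "l = ol ! t" using ol(3) by (auto simp: in_set_conv_nth)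
      have "vnorm (vblock d h1 t) = 0" using z t by auto
      hence "vblock d h1 t = 0\<^sub>v d" using vnorm_eq_0_iff[of "vblock d h1 t"] by simp
      thus ?thesis unfolding h1_def using vblock_ext[of t ol d h] t ol(3) by simp
    qed
    have "h = 0\<^sub>v (M*d)" by (rule inj_supp[OF dh out Dh])
    hence "x = x0" unfolding h_def using x x0 by (auto simp: vec_eq_iff)
    with ne show False by simp
  qed
  have h0A: "h0 + A *\<^sub>v h1 = 0\<^sub>v (k*d)"
  proof -
    have h0c: "h0 \<in> carrier_vec (k*d)" by (rule carrier_vecI[OF dh0])
    have h1c: "h1 \<in> carrier_vec ((M-k)*d)" by (rule carrier_vecI[OF dh1])
    have "pinv D0 *\<^sub>v (D0 *\<^sub>v h0 + D0b *\<^sub>v h1) = pinv D0 *\<^sub>v (D0 *\<^sub>v h0) + pinv D0 *\<^sub>v (D0b *\<^sub>v h1)"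
      by (rule mult_add_distrib_mat_vec[OF pinvD0(1)]) (auto intro!: mult_mat_vec_carrier D0_carrier D0b_carrier h0c h1c)
    also have "pinv D0 *\<^sub>v (D0 *\<^sub>v h0) = (pinv D0 * D0) *\<^sub>v h0"
      by (rule assoc_mult_mat_vec[symmetric, OF pinvD0(1) D0_carrier h0c])
    also have "\<dots> = h0" unfolding pinvD0(4) using h0c by simp
    also have "pinv D0 *\<^sub>v (D0b *\<^sub>v h1) = A *\<^sub>v h1" unfolding A_def
      by (rule assoc_mult_mat_vec[symmetric, OF pinvD0(1) D0b_carrier h1c])
    finally have "pinv D0 *\<^sub>v (D0 *\<^sub>v h0 + D0b *\<^sub>v h1) = h0 + A *\<^sub>v h1" .
    moreover have "pinv D0 *\<^sub>v 0\<^sub>v (R*d) = 0\<^sub>v (k*d)"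
      using pinvD0(1) by (intro eq_vecI) (auto simp: scalar_prod_def)
    ultimately show ?thesis using dec by simp
  qed
  have h0bound: "bmix d k h0 \<le> rho_c d A * bmix d (M-k) h1"
  proof -
    have "bmix d k h0 = (\<Sum>l<k. vnorm (vblock d (A *\<^sub>v h1) l))" unfolding bmix_def
    proof (rule sum.cong[OF refl])
      fix l assume "l \<in> {..<k}"
      hence bd: "l * d + d \<le> k * d" using mult_right_mono[of "Suc l" k d] by simp
      show "vnorm (vblock d h0 l) = vnorm (vblock d (A *\<^sub>v h1) l)"
        by (rule vnorm_vblock_neg[OF h0A dh0 _ bd]) (simp add: carrier_matD[OF A_carrier])
    qed
    also have "\<dots> \<le> rho_c d A * bmix d (M-k) h1" unfolding bmix_def
      by (rule blk_mixed_bound[OF A_carrier d dh1])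
    finally show ?thesis .
  qed
  have mx: "mixed_norm d M x = (\<Sum>j<k. vnorm (vblock d x (sl!j))) + bmix d (M-k) h1"
  proof -
    have "mixed_norm d M x = (\<Sum>j<k. vnorm (vblock d x (sl!j))) + (\<Sum>j<M-k. vnorm (vblock d x (ol!j)))"
      unfolding mixed_norm_def by (rule sum_M_split)
    also have "(\<Sum>j<M-k. vnorm (vblock d x (ol!j))) = bmix d (M-k) h1" unfolding bmix_def
    proof (rule sum.cong[OF refl])
      fix j assume j: "j \<in> {..<M-k}"
      have "vblock d h1 j = vblock d h (ol!j)" unfolding h1_def by (rule vblock_ext) (use j ol in simp)
      also have "\<dots> = vblock d x (ol!j) - vblock d x0 (ol!j)" using blkh tl_lt j by simp
      also have "vblock d x0 (ol!j) = 0\<^sub>v d" using x0_out tl_lt tl_notin j by simp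
      finally have F: "vblock d h1 j = vblock d x (ol!j) - 0\<^sub>v d" .
      have "vblock d h1 j = vblock d x (ol!j)"
      proof (rule eq_vecI)
        fix t assume "t < dim_vec (vblock d x (ol!j))"
        hence t: "t < d" by simp
        have "vblock d h1 j $ t = (vblock d x (ol!j) - 0\<^sub>v d) $ t" unfolding F ..
        also have "\<dots> = vblock d x (ol!j) $ t" using t by simp
        finally show "vblock d h1 j $ t = vblock d x (ol!j) $ t" .
      qed simp
      thus "vnorm (vblock d x (ol!j)) = vnorm (vblock d h1 j)" by simp
    qed
    finally show ?thesis .
  qed
  have mx0: "mixed_norm d M x0 = (\<Sum>j<k. vnorm (vblock d x0 (sl!j)))"
  proof -
    have "mixed_norm d M x0 = (\<Sum>j<k. vnorm (vblock d x0 (sl!j))) + (\<Sum>j<M-k. vnorm (vblock d x0 (ol!j)))"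
      unfolding mixed_norm_def by (rule sum_M_split)
    also have "(\<Sum>j<M-k. vnorm (vblock d x0 (ol!j))) = 0"
      by (rule sum.neutral) (use x0_out tl_lt tl_notin in simp)
    finally show ?thesis by simp
  qed
  have sl_part: "(\<Sum>j<k. vnorm (vblock d x0 (sl!j))) - bmix d k h0 \<le> (\<Sum>j<k. vnorm (vblock d x (sl!j)))"
  proof -
    have "(\<Sum>j<k. vnorm (vblock d x0 (sl!j)) - vnorm (vblock d h0 j)) \<le> (\<Sum>j<k. vnorm (vblock d x (sl!j)))"
    proof (rule sum_mono)
      fix j assume j: "j \<in> {..<k}"
      have "vblock d h0 j = vblock d x (sl!j) - vblock d x0 (sl!j)"
        unfolding h0_def using vblock_ext[of j sl d h] blkh[OF sl_lt] j sl(3) by simp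
      hence "vnorm (vblock d h0 j) = vnorm (vblock d x0 (sl!j) - vblock d x (sl!j))"
        unfolding vnorm_def by (simp add: norm_minus_commute)
      moreover have "vnorm (vblock d x0 (sl!j)) - vnorm (vblock d x (sl!j)) \<le> vnorm (vblock d x0 (sl!j) - vblock d x (sl!j))"
        by (rule vnorm_minus_le) simp
      ultimately show "vnorm (vblock d x0 (sl!j)) - vnorm (vblock d h0 j) \<le> vnorm (vblock d x (sl!j))" by simp
    qed
    thus ?thesis unfolding bmix_def by (simp add: sum_subtractf)
  qed
  have "mixed_norm d M x0 < mixed_norm d M x0 - bmix d k h0 + bmix d (M-k) h1"
  proof -
    have "bmix d k h0 < bmix d (M-k) h1"
    proof -
      have "rho_c d A * bmix d (M-k) h1 < 1 * bmix d (M-k) h1"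
        by (rule mult_strict_right_mono[OF rho h1pos])
      thus ?thesis using h0bound by simp
    qed
    thus ?thesis by simp
  qed
  also have "\<dots> \<le> mixed_norm d M x" using mx mx0 sl_part by simp
  finally show ?thesis .
qed


lemma run_at:
  assumes run: "bomp_run d M D y is xs" and j: "j < length is"
  shows "is ! j < M"
    "\<And>i. i < M \<Longrightarrow> vnorm (ctrans (cblock d D i) *\<^sub>v (if j = 0 then y else y - D *\<^sub>v (xs ! (j - 1))))
        \<le> vnorm (ctrans (cblock d D (is ! j)) *\<^sub>v (if j = 0 then y else y - D *\<^sub>v (xs ! (j - 1))))"
    "xs ! j \<in> ls_coeffs d M D y (set (take (Suc j) is))"
  using run j unfolding bomp_run_def Let_def by blast+

lemma minus_blocks_zero:
  assumes "dim_vec a = M * d" "dim_vec b = M * d" "l < M" "vblock d a l = 0\<^sub>v d" "vblock d b l = 0\<^sub>v d"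
  shows "vblock d (a - b) l = 0\<^sub>v d"
  using vblock_minus[OF assms(1,2,3)] assms(4,5) by (auto intro!: eq_vecI)

lemma bomp_step:
  assumes rho: "rho_c d A < 1" and y: "y = D *\<^sub>v x0" and run: "bomp_run d M D y is xs"
    and len: "length is \<le> k"
  shows "\<forall>j<length is. is ! j \<in> S \<and> is ! j \<notin> set (take j is)"
proof -
  have dy: "dim_vec y = R * d" using y carrier_matD[OF D] by simp
  have x0c: "x0 \<in> carrier_vec (M*d)" by (rule carrier_vecI[OF x0])
  have "j < length is \<longrightarrow> is ! j \<in> S \<and> is ! j \<notin> set (take j is)" for j
  proof (induction j rule: less_induct)
    case (less j)
    show ?case
    proof
      assume jl: "j < length is"
      hence jk: "j < k" using len by simp
      have prev: "set (take j is) \<subseteq> S"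
      proof
        fix i assume "i \<in> set (take j is)"
        then obtain j' where j': "j' < length (take j is)" "i = take j is ! j'" by (auto simp: in_set_conv_nth)
        hence "j' < j" "i = is ! j'" by auto
        thus "i \<in> S" using less.IH[of j'] jl by auto
      qed
      define r where "r = (if j = 0 then y else y - D *\<^sub>v (xs ! (j - 1)))"
      have ijM: "is ! j < M" by (rule run_at(1)[OF run jl])
      have maxi: "\<And>i. i < M \<Longrightarrow> vnorm (ctrans (cblock d D i) *\<^sub>v r) \<le> vnorm (ctrans (cblock d D (is ! j)) *\<^sub>v r)"
        unfolding r_def by (rule run_at(2)[OF run jl])
      have "\<exists>u. dim_vec u = k * d \<and> r = D0 *\<^sub>v u \<and> r \<noteq> 0\<^sub>v (R*d) \<and>
              (\<forall>i\<in>set (take j is). ctrans (cblock d D i) *\<^sub>v r = 0\<^sub>v d)"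
      proof (cases "j = 0")
        case True
        hence r: "r = D *\<^sub>v x0" unfolding r_def y by simp
        have Dx0: "D *\<^sub>v x0 = D0 *\<^sub>v ext d sl x0" by (rule decomp_supp[OF x0 x0_out])
        have "x0 \<noteq> 0\<^sub>v (M*d)"
        proof
          assume x00: "x0 = 0\<^sub>v (M*d)"
          have "S \<noteq> {}" using cardS jk by auto
          then obtain l where l: "l \<in> S" by auto
          hence "0 < vnorm (vblock d x0 l)" unfolding S_def block_support_def by auto
          moreover have "vblock d x0 l = 0\<^sub>v d" using x00 l S_sub by (intro eq_vecI) (auto simp: blk_lt)
          ultimately show False by simp
        qed
        moreover have "x0 = 0\<^sub>v (M*d)" if "D *\<^sub>v x0 = 0\<^sub>v (R*d)"
          by (rule inj_supp[OF x0 _ that]) (simp add: x0_out)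
        ultimately have "r \<noteq> 0\<^sub>v (R*d)" unfolding r by auto
        thus ?thesis using r Dx0 True sl(3) by (intro exI[of _ "ext d sl x0"]) simp
      next
        case False
        define xj where "xj = xs ! (j - 1)"
        have r: "r = y - D *\<^sub>v xj" unfolding r_def xj_def using False by simp
        have xjin: "xj \<in> ls_coeffs d M D y (set (take j is))"
          using run_at(3)[OF run, of "j - 1"] jl False unfolding xj_def by simp
        have dxj: "dim_vec xj = M * d" using xjin unfolding ls_coeffs_def by simp
        have xjout: "vblock d xj l = 0\<^sub>v d" if "l < M" "l \<notin> set (take j is)" for l
          using xjin that unfolding ls_coeffs_def by blast
        define z where "z = x0 - xj"
        have dz: "dim_vec z = M * d" unfolding z_def using x0 dxj by simp
        have zout: "vblock d z l = 0\<^sub>v d" if "l < M" "l \<notin> S" for l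
          unfolding z_def by (rule minus_blocks_zero[OF x0 dxj that(1) x0_out[OF that] xjout]) (use that prev in auto)
        have rz: "r = D *\<^sub>v z" unfolding r y z_def
          by (rule mult_minus_distrib_mat_vec[symmetric, OF D x0c carrier_vecI[OF dxj]])
        have rD0: "r = D0 *\<^sub>v ext d sl z" using rz decomp_supp[OF dz zout] by simp
        have "r \<noteq> 0\<^sub>v (R*d)"
        proof
          assume "r = 0\<^sub>v (R*d)"
          hence "D *\<^sub>v z = 0\<^sub>v (R*d)" using rz by simp
          hence "z = 0\<^sub>v (M*d)" using inj_supp[OF dz] zout by blast
          hence xx: "x0 = xj" unfolding z_def using x0 dxj by (auto simp: vec_eq_iff)
          have "block_support d M x0 \<subseteq> set (take j is)"
          proof
            fix l assume l: "l \<in> block_support d M x0"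
            hence lM: "l < M" and pos: "0 < vnorm (vblock d x0 l)" unfolding block_support_def by auto
            show "l \<in> set (take j is)"
            proof (rule ccontr)
              assume "l \<notin> set (take j is)"
              hence "vblock d x0 l = 0\<^sub>v d" using xjout[OF lM] xx by simp
              with pos show False by simp
            qed
          qed
          hence "card (block_support d M x0) \<le> card (set (take j is))" by (rule card_mono[OF finite_set])
          also have "\<dots> \<le> length (take j is)" by (rule card_length)
          also have "\<dots> \<le> j" by simp
          finally show False using card jk by simp
        qed
        moreover have "\<forall>i\<in>set (take j is). ctrans (cblock d D i) *\<^sub>v r = 0\<^sub>v d"
        proof
          fix i assume i: "i \<in> set (take j is)"
          hence iM: "i < M" using prev S_sub by auto
          show "ctrans (cblock d D i) *\<^sub>v r = 0\<^sub>v d" unfolding r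
            by (rule ls_orth[OF D dy xjin i iM])
        qed
        ultimately show ?thesis using rD0 sl(3) by (intro exI[of _ "ext d sl z"]) simp
      qed
      then obtain u where u: "dim_vec u = k * d" "r = D0 *\<^sub>v u" "r \<noteq> 0\<^sub>v (R*d)"
        and orth: "\<forall>i\<in>set (take j is). ctrans (cblock d D i) *\<^sub>v r = 0\<^sub>v d" by blast
      obtain l where l: "l \<in> S" "0 < vnorm (ctrans (cblock d D l) *\<^sub>v r)"
        and dom: "\<forall>i<M. i \<notin> S \<longrightarrow> vnorm (ctrans (cblock d D i) *\<^sub>v r) < vnorm (ctrans (cblock d D l) *\<^sub>v r)"
        using erc[OF rho u] by blast
      have ge: "vnorm (ctrans (cblock d D l) *\<^sub>v r) \<le> vnorm (ctrans (cblock d D (is ! j)) *\<^sub>v r)"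
        using maxi l(1) S_sub by auto
      have inS: "is ! j \<in> S"
      proof (rule ccontr)
        assume "is ! j \<notin> S"
        hence "vnorm (ctrans (cblock d D (is ! j)) *\<^sub>v r) < vnorm (ctrans (cblock d D l) *\<^sub>v r)"
          using dom ijM by blast
        with ge show False by simp
      qed
      moreover have "is ! j \<notin> set (take j is)"
      proof
        assume "is ! j \<in> set (take j is)"
        hence "ctrans (cblock d D (is ! j)) *\<^sub>v r = 0\<^sub>v d" using orth by blast
        with ge l(2) show False by simp
      qed
      ultimately show "is ! j \<in> S \<and> is ! j \<notin> set (take j is)" by blast
    qed
  qed
  thus ?thesis by blast
qed

lemma bomp_final:
  assumes rho: "rho_c d A < 1" and y: "y = D *\<^sub>v x0" and run: "bomp_run d M D y is xs"
    and len: "length is = k" and k0: "k \<noteq> 0"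
  shows "last xs = x0"
proof -
  have st: "\<forall>j<length is. is ! j \<in> S \<and> is ! j \<notin> set (take j is)"
    by (rule bomp_step[OF rho y run]) (simp add: len)
  have dist: "distinct is"
    unfolding distinct_conv_nth
  proof (intro allI impI)
    fix i j assume ij: "i < length is" "j < length is" "i \<noteq> j"
    show "is ! i \<noteq> is ! j"
    proof (cases "i < j")
      case True
      hence "is ! i \<in> set (take j is)" using ij by (auto simp: in_set_conv_nth intro!: exI[of _ i])
      thus ?thesis using st ij by auto
    next
      case False
      hence "j < i" using ij by simp
      hence "is ! j \<in> set (take i is)" using ij by (auto simp: in_set_conv_nth intro!: exI[of _ j])
      thus ?thesis using st ij by metis
    qed
  qed
  have sub: "set is \<subseteq> S" using st by (auto simp: in_set_conv_nth)
  have "card (set is) = k" using distinct_card[OF dist] len by simp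
  hence setS: "set is = S" using card_subset_eq[OF S_fin sub] cardS by simp
  have lxs: "length xs = k" using run len unfolding bomp_run_def by simp
  hence "xs \<noteq> []" using k0 by auto
  hence lastx: "last xs = xs ! (k - 1)" using lxs by (simp add: last_conv_nth)
  have "xs ! (k - 1) \<in> ls_coeffs d M D y (set (take (Suc (k - 1)) is))"
    by (rule run_at(3)[OF run]) (use len k0 in simp)
  hence xin: "last xs \<in> ls_coeffs d M D y S" unfolding lastx using k0 len setS by simp
  define xl where "xl = last xs"
  have dxl: "dim_vec xl = M * d" using xin unfolding ls_coeffs_def xl_def by simp
  have xlout: "vblock d xl l = 0\<^sub>v d" if "l < M" "l \<notin> S" for l
    using xin that unfolding ls_coeffs_def xl_def by blast
  have "vnorm (y - D *\<^sub>v xl) \<le> vnorm (y - D *\<^sub>v x0)"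
    using xin x0 x0_out unfolding ls_coeffs_def xl_def by blast
  also have "y - D *\<^sub>v x0 = 0\<^sub>v (R*d)" unfolding y using carrier_matD[OF D] by (intro eq_vecI) auto
  finally have "vnorm (y - D *\<^sub>v xl) \<le> 0" by simp
  hence "vnorm (y - D *\<^sub>v xl) = 0" using vnorm_nonneg[of "y - D *\<^sub>v xl"] by linarith
  hence yz: "y - D *\<^sub>v xl = 0\<^sub>v (R*d)" using vnorm_eq_0_iff[of "y - D *\<^sub>v xl"] y carrier_matD[OF D] by simp
  define z where "z = x0 - xl"
  have dz: "dim_vec z = M * d" unfolding z_def using x0 dxl by simp
  have zout: "vblock d z l = 0\<^sub>v d" if "l < M" "l \<notin> S" for l
    unfolding z_def by (rule minus_blocks_zero[OF x0 dxl that(1) x0_out[OF that] xlout[OF that]])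
  have "D *\<^sub>v z = D *\<^sub>v x0 - D *\<^sub>v xl" unfolding z_def
    by (rule mult_minus_distrib_mat_vec[OF D carrier_vecI[OF x0] carrier_vecI[OF dxl]])
  also have "\<dots> = y - D *\<^sub>v xl" unfolding y ..
  finally have "D *\<^sub>v z = 0\<^sub>v (R*d)" using yz by simp
  hence "z = 0\<^sub>v (M*d)" using inj_supp[OF dz] zout by blast
  thus ?thesis unfolding z_def xl_def[symmetric] using x0 dxl by (auto simp: vec_eq_iff)
qed

end


theorem theorem2:
  fixes D :: "complex mat" and x0 y :: "complex vec" and d R M k :: nat
  assumes "d > 0"
    and "D \<in> carrier_mat (R * d) (M * d)"
    and "\<forall>j < M * d. vnorm (col D j) = 1"
    and "\<forall>g. dim_vec g = M * d \<and> g \<noteq> 0\<^sub>v (M * d) \<and> block_sparse d M (2 * k) g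
              \<longrightarrow> D *\<^sub>v g \<noteq> 0\<^sub>v (R * d)"
    and "dim_vec x0 = M * d"
    and "card (block_support d M x0) = k"
    and "y = D *\<^sub>v x0"
    and "rho_c d (pinv (blocks_mat d D (sorted_list_of_set (block_support d M x0)))
                 * blocks_mat d D (sorted_list_of_set ({..<M} - block_support d M x0))) < 1"
  shows "(\<forall>x. dim_vec x = M * d \<and> D *\<^sub>v x = y \<and> x \<noteq> x0
              \<longrightarrow> mixed_norm d M x0 < mixed_norm d M x)
       \<and> (\<forall>is xs. bomp_run d M D y is xs \<and> length is \<le> k \<longrightarrow>
              (\<forall>j < length is. is ! j \<in> block_support d M x0 \<and> is ! j \<notin> set (take j is)))
       \<and> (\<forall>is xs. bomp_run d M D y is xs \<and> length is = k \<longrightarrow>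
              (if k = 0 then 0\<^sub>v (M * d) else last xs) = x0)"
  proof -
  interpret ercs D x0 d R M k
    by unfold_locales (use assms in auto)
  have rho: "rho_c d A < 1"
    using assms(8) unfolding A_def D0_def D0b_def sl_def ol_def S_def .
  have y: "y = D *\<^sub>v x0" by (rule assms(7))
  have P1: "\<forall>x. dim_vec x = M * d \<and> D *\<^sub>v x = y \<and> x \<noteq> x0
              \<longrightarrow> mixed_norm d M x0 < mixed_norm d M x"
    using lopt[OF rho] y by blast
  have P2: "\<forall>is xs. bomp_run d M D y is xs \<and> length is \<le> k \<longrightarrow>
              (\<forall>j < length is. is ! j \<in> block_support d M x0 \<and> is ! j \<notin> set (take j is))"
    using bomp_step[OF rho y] unfolding S_def by blast
  have P3: "(if k = 0 then 0\<^sub>v (M * d) else last xs) = x0"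
    if run: "bomp_run d M D y is xs \<and> length is = k" for "is" xs
  proof (cases "k = 0")
    case False
    have "last xs = x0" using bomp_final[OF rho y _ _ False] run by blast
    thus ?thesis using False by simp
  next
    case True
    hence Se: "S = {}" using cardS S_fin by simp
    have "x0 = 0\<^sub>v (M * d)"
    proof (rule eq_vecI)
      fix c assume "c < dim_vec (0\<^sub>v (M * d))"
      hence c: "c < M * d" by simp
      hence cd: "c div d < M" using d by (simp add: less_mult_imp_div_less)
      have md: "c mod d < d" using d by simp
      have "x0 $ c = vblock d x0 (c div d) $ (c mod d)" using md by simp
      also have "\<dots> = 0" using x0_out[OF cd] Se md by simp
      finally show "x0 $ c = 0\<^sub>v (M * d) $ c" using c by simp
    qed (simp add: x0)
    thus ?thesis using True by simp
  qed
  show ?thesis using P1 P2 P3 by blast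
qed

end
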